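(* Let $p\in\mathbb N$ and let $u_j(t)$, $j\in\mathbb Z$, be a solution (on an interval containing $t=0$) of the lattice $$u'_j=u_j(u_{j+p}+\cdots+u_{j+1}-u_{j-1}-\cdots-u_{j-p})$$ satisfying the boundary conditions $u_j=0$ for $j\le 0$ and such that $u_j\ne 0$ for $j>0$. Then it admits the representation $$u_1=f'_1/f_1,\qquad u_j=f'_j/f_j-f'_{j-1}/f_{j-1},\quad j>1,$$ where the functions $f_j$, $j\ge -p$, satisfy the bilinear lattice equation $$f_{j-1}f'_j-f'_{j-1}f_j=f_{j-p-1}f_{j+p},\qquad j=1,2,\dots,$$ with $f_{-p}=\dots=f_0=1$ and $f_1(0)=\dots=f_p(0)=1$.
   Context: $f'=df/dt$. *)

theory Defs
  imports "HOL-Analysis.Analysis"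
begin

end

theory Submission
  imports Defs
begin

function ff :: "nat \<Rightarrow> (int \<Rightarrow> real \<Rightarrow> real) \<Rightarrow> (int \<Rightarrow> real \<Rightarrow> real) \<Rightarrow> int \<Rightarrow> real \<Rightarrow> real" where
  "ff p B u j t = (if j \<le> int p \<or> p = 0 then B j t else
     ff p B u (j - int p - 1) t * ff p B u (j - int p) t * u (j - int p) t / ff p B u (j - 2 * int p - 1) t)"
  by auto
termination by (relation "Wellfounded.measure (\<lambda>(p,B,u,j,t). nat j)") auto

lemma ff_low: "j \<le> int p \<Longrightarrow> ff p B u j = B j"
  by (rule ext) simp

lemma ff_high: "j > int p \<Longrightarrow> p \<ge> 1 \<Longrightarrow> ff p B u j = (\<lambda>t.
     ff p B u (j - int p - 1) t * ff p B u (j - int p) t * u (j - int p) t / ff p B u (j - 2 * int p - 1) t)"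
  by (rule ext) simp

lemma open_interval_ereal:
  fixes I :: "real set"
  assumes "open I" "is_interval I"
  shows "x \<in> I \<longleftrightarrow> Inf (ereal ` I) < ereal x \<and> ereal x < Sup (ereal ` I)"
proof
  assume x: "x \<in> I"
  then obtain e where e: "e > 0" "ball x e \<subseteq> I" using assms(1) open_contains_ball by blast
  have "x - e/2 \<in> I" "x + e/2 \<in> I" using e by (auto simp: dist_real_def subset_iff)
  hence "Inf (ereal ` I) \<le> ereal (x - e/2)" "ereal (x + e/2) \<le> Sup (ereal ` I)"
    by (auto intro: Inf_lower Sup_upper)
  moreover have "ereal (x - e/2) < ereal x" "ereal x < ereal (x + e/2)" using e by auto
  ultimately show "Inf (ereal ` I) < ereal x \<and> ereal x < Sup (ereal ` I)"
    by (meson order_le_less_trans order_less_le_trans)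
next
  assume "Inf (ereal ` I) < ereal x \<and> ereal x < Sup (ereal ` I)"
  then obtain y z where "y \<in> I" "z \<in> I" "ereal y < ereal x" "ereal x < ereal z"
    by (auto simp: Inf_less_iff less_Sup_iff)
  thus "x \<in> I" using assms(2) unfolding is_interval_1 by (meson less_eq_ereal_def less_imp_le ereal_less_eq(3))
qed

lemma antideriv_open_interval:
  fixes I :: "real set" and g :: "real \<Rightarrow> real"
  assumes "open I" "is_interval I" "0 \<in> I" "\<And>x. x \<in> I \<Longrightarrow> isCont g x"
  shows "\<exists>F. F 0 = 0 \<and> (\<forall>t\<in>I. (F has_real_derivative g t) (at t))"
proof -
  let ?a = "Inf (ereal ` I)" and ?b = "Sup (ereal ` I)"
  have ab: "?a < ?b" using open_interval_ereal[OF assms(1,2), of 0] assms(3) by auto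
  have cont: "isCont g x" if "?a < ereal x" "ereal x < ?b" for x
    using assms(4) open_interval_ereal[OF assms(1,2), of x] that by simp
  obtain G where G: "\<And>x::real. ?a < x \<Longrightarrow> x < ?b \<Longrightarrow> (G has_vector_derivative g x) (at x)"
    using einterval_antiderivative[OF ab, of g, OF cont] by metis
  show ?thesis
  proof (intro exI conjI ballI)
    fix t assume "t \<in> I"
    hence "(G has_real_derivative g t) (at t)"
      using G[of t] open_interval_ereal[OF assms(1,2), of t] by (simp add: has_real_derivative_iff_has_vector_derivative)
    thus "((\<lambda>x. G x - G 0) has_real_derivative g t) (at t)"
      by (auto intro!: derivative_eq_intros)
  qed simp
qed


lemma int_sum_Suc: "(\<Sum>k=1..int (Suc m). g k) = (\<Sum>k=1..int m. g k) + (g (int m + 1) :: real)"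
proof -
  have "{1..int (Suc m)} = insert (int m + 1) {1..int m}" by auto
  thus ?thesis by simp
qed

theorem proposition2:
  fixes p :: nat and I :: "real set" and u :: "int \<Rightarrow> real \<Rightarrow> real"
  assumes p_pos: "p \<ge> 1"
    and I_open: "open I" and I_int: "is_interval I" and I_0: "0 \<in> I"
    and lattice: "\<forall>j. \<forall>t\<in>I. ((u j) has_real_derivative
            (u j t * ((\<Sum>k=1..int p. u (j + k) t) - (\<Sum>k=1..int p. u (j - k) t)))) (at t)"
    and bc_zero: "\<forall>j\<le>0. \<forall>t\<in>I. u j t = 0"
    and bc_nonzero: "\<forall>j>0. \<forall>t\<in>I. u j t \<noteq> 0"
  shows "\<exists>f :: int \<Rightarrow> real \<Rightarrow> real.
      (\<forall>j\<ge>- int p. \<forall>t\<in>I. f j differentiable (at t) \<and> f j t \<noteq> 0)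
    \<and> (\<forall>t\<in>I. u 1 t = deriv (f 1) t / f 1 t)
    \<and> (\<forall>j>1. \<forall>t\<in>I. u j t = deriv (f j) t / f j t - deriv (f (j - 1)) t / f (j - 1) t)
    \<and> (\<forall>j\<ge>1. \<forall>t\<in>I. f (j - 1) t * deriv (f j) t - deriv (f (j - 1)) t * f j t
                        = f (j - int p - 1) t * f (j + int p) t)
    \<and> (\<forall>j. - int p \<le> j \<and> j \<le> 0 \<longrightarrow> (\<forall>t\<in>I. f j t = 1))
    \<and> (\<forall>j. 1 \<le> j \<and> j \<le> int p \<longrightarrow> f j 0 = 1)"
proof -
  define U where "U = (\<lambda>(i::int) t. \<Sum>k\<in>{1..i}. u k t)"
  have key: "U i t - U (i - 1) t = u i t" if "t \<in> I" for i t
  proof (cases "i \<ge> 1")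
    case True
    hence "{1..i} = insert i {1..i-1}" by auto
    thus ?thesis by (simp add: U_def)
  next
    case False
    thus ?thesis using bc_zero that by (simp add: U_def)
  qed
  have L1: "(\<Sum>k=1..int m. u (j+k) t) = U (j + int m) t - U j t" if "t \<in> I" for j m t
  proof (induction m)
    case (Suc m)
    show ?case unfolding int_sum_Suc using Suc key[OF that, of "j + int m + 1"] by (simp add: algebra_simps)
  qed simp
  have L2: "(\<Sum>k=1..int m. u (j-k) t) = U (j - 1) t - U (j - int m - 1) t" if "t \<in> I" for j m t
  proof (induction m)
    case (Suc m)
    show ?case unfolding int_sum_Suc using Suc key[OF that, of "j - int m - 1"] by (simp add: algebra_simps)
  qed simp
  have ucont: "isCont (u k) t" if "t \<in> I" for k t
    using lattice that DERIV_isCont by blast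
  have Ucont: "isCont (\<lambda>t. U i t) t" if "t \<in> I" for i t
    unfolding U_def using ucont[OF that] by (auto intro!: continuous_intros)
  have "\<forall>i. \<exists>F. F 0 = 0 \<and> (\<forall>t\<in>I. (F has_real_derivative U i t) (at t))"
    using antideriv_open_interval[OF I_open I_int I_0] Ucont by blast
  then obtain F where F: "\<And>i. F i 0 = 0" "\<And>i t. t \<in> I \<Longrightarrow> (F i has_real_derivative U i t) (at t)"
    by metis
  define B where "B = (\<lambda>(j::int) t. if j \<le> 0 then 1 else exp (F j t))"
  define f where "f = ff p B u"
  have main: "\<forall>t\<in>I. f (int n - int p) t \<noteq> 0 \<and>
     (f (int n - int p) has_real_derivative U (int n - int p) t * f (int n - int p) t) (at t)" for n
  proof (induction n rule: less_induct)
    case (less n)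
    define j where "j = int n - int p"
    show ?case unfolding j_def[symmetric]
    proof (intro ballI)
      fix t assume t: "t \<in> I"
      consider "j \<le> 0" | "1 \<le> j \<and> j \<le> int p" | "j > int p" by linarith
      thus "f j t \<noteq> 0 \<and> (f j has_real_derivative U j t * f j t) (at t)"
      proof cases
        case 1
        hence fj: "f j = (\<lambda>_. 1)" using ff_low[of j p B u] by (auto simp: f_def B_def)
        have "U j t = 0" using 1 by (simp add: U_def)
        thus ?thesis by (simp add: fj)
      next
        case 2
        hence fj: "f j = (\<lambda>t. exp (F j t))" using ff_low[of j p B u] by (auto simp: f_def B_def)
        show ?thesis unfolding fj using F(2)[OF t, of j]
          by (auto intro!: derivative_eq_intros simp: mult.commute)
      next
        case 3
        define i where "i = j - int p"
        have i1: "i \<ge> 1" using 3 i_def by simp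
        have fj: "f j = (\<lambda>t. f (i - 1) t * f i t * u i t / f (i - int p - 1) t)"
          using ff_high[of p j B u] 3 p_pos unfolding f_def i_def by (auto simp: algebra_simps)
        have IH: "\<forall>t\<in>I. f k t \<noteq> 0 \<and> (f k has_real_derivative U k t * f k t) (at t)"
          if "- int p \<le> k" "k < j" for k
          using less[of "nat (k + int p)"] that j_def by simp
        have A: "f (i - 1) t \<noteq> 0 \<and> (f (i - 1) has_real_derivative U (i - 1) t * f (i - 1) t) (at t)"
          using IH[of "i - 1"] i1 i_def p_pos t by auto
        have Bf: "f i t \<noteq> 0 \<and> (f i has_real_derivative U i t * f i t) (at t)"
          using IH[of "i"] i1 i_def p_pos t by auto
        have D: "f (i - int p - 1) t \<noteq> 0 \<and> (f (i - int p - 1) has_real_derivative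
                   U (i - int p - 1) t * f (i - int p - 1) t) (at t)"
          using IH[of "i - int p - 1"] i1 i_def p_pos t by auto
        have C: "(u i has_real_derivative u i t * ((U (i + int p) t - U i t) - (U (i - 1) t - U (i - int p - 1) t))) (at t)"
          using lattice t L1[OF t, of i p] L2[OF t, of i p] by metis
        have ui: "u i t \<noteq> 0" using bc_nonzero i1 t by auto
        have jj: "j = i + int p" using i_def by simp
        note dd = DERIV_divide[OF DERIV_mult[OF DERIV_mult[OF conjunct2[OF A] conjunct2[OF Bf]] C] conjunct2[OF D] conjunct1[OF D]]
        show ?thesis unfolding fj
        proof
          show "f (i - 1) t * f i t * u i t / f (i - int p - 1) t \<noteq> 0" using A Bf D ui by simp
          show "((\<lambda>t. f (i - 1) t * f i t * u i t / f (i - int p - 1) t) has_real_derivative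
             U j t * (f (i - 1) t * f i t * u i t / f (i - int p - 1) t)) (at t)"
            using dd
          proof (rule DERIV_cong)
            show "(((U (i - 1) t * f (i - 1) t * f i t + U i t * f i t * f (i - 1) t) * u i t +
                u i t * (U (i + int p) t - U i t - (U (i - 1) t - U (i - int p - 1) t)) * (f (i - 1) t * f i t)) *
              f (i - int p - 1) t - f (i - 1) t * f i t * u i t * (U (i - int p - 1) t * f (i - int p - 1) t)) /
             (f (i - int p - 1) t * f (i - int p - 1) t) =
             U j t * (f (i - 1) t * f i t * u i t / f (i - int p - 1) t)"
              using D by (simp add: jj field_simps)
          qed
        qed
      qed
    qed
  qed
  have M: "f j t \<noteq> 0 \<and> (f j has_real_derivative U j t * f j t) (at t)" if "j \<ge> - int p" "t \<in> I" for j t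
    using main[of "nat (j + int p)"] that by simp
  have dv: "deriv (f j) t = U j t * f j t" if "j \<ge> - int p" "t \<in> I" for j t
    using M[OF that] DERIV_imp_deriv by blast
  show ?thesis
  proof (intro exI[of _ f] conjI allI impI ballI)
    fix j t assume "j \<ge> - int p" "t \<in> I"
    thus "f j differentiable (at t)" "f j t \<noteq> 0" using M
      by (auto simp: differentiable_def has_field_derivative_def)
  next
    fix t assume t: "t \<in> I"
    show "u 1 t = deriv (f 1) t / f 1 t"
      using dv[OF _ t, of 1] M[OF _ t, of 1] key[OF t, of 1] by (simp add: U_def)
  next
    fix j :: int and t assume j: "j > 1" and t: "t \<in> I"
    show "u j t = deriv (f j) t / f j t - deriv (f (j - 1)) t / f (j - 1) t"
      using dv[OF _ t, of j] M[OF _ t, of j] dv[OF _ t, of "j-1"] M[OF _ t, of "j-1"] key[OF t, of j] j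
      by simp
  next
    fix j :: int and t assume j: "j \<ge> 1" and t: "t \<in> I"
    have fj: "f (j + int p) = (\<lambda>t. f (j - 1) t * f j t * u j t / f (j - int p - 1) t)"
      using ff_high[of p "j + int p" B u] j p_pos unfolding f_def by (auto simp: algebra_simps)
    have nz: "f (j - int p - 1) t \<noteq> 0" using M[OF _ t, of "j - int p - 1"] j by simp
    show "f (j - 1) t * deriv (f j) t - deriv (f (j - 1)) t * f j t
                        = f (j - int p - 1) t * f (j + int p) t"
      using dv[OF _ t, of j] dv[OF _ t, of "j-1"] key[OF t, of j] j nz unfolding fj
      by (simp add: algebra_simps)
  next
    fix j :: int and t assume "- int p \<le> j \<and> j \<le> 0" "t \<in> I"
    thus "f j t = 1" by (simp add: f_def B_def)
  next
    fix j :: int assume "1 \<le> j \<and> j \<le> int p"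
    thus "f j 0 = 1" by (simp add: f_def B_def F(1))
  qed
qed

end
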